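(* Let $\mathcal{G}_n$ be the random graph described in the context and, for $\delta_n>0$ and $u\in\mathcal{V}_n^k$, let $$A_n^k(u)=\Big\{\big|N_n^k(u)-a_nV_n^k\big|\ge\sqrt{a_nV_n^k\delta_n}\Big\}.$$ Suppose the sequences $\gamma_n>0$ and $\delta_n>0$ satisfy $$\lim_{n\to\infty}\delta_n=\infty,\qquad\limsup_{n\to\infty}\frac{\delta_n}{\lambda_n}<\infty,\qquad\limsup_{n\to\infty}\frac{\gamma_n}{\delta_n}<\infty.$$ Then $\frac{\gamma_n}{n}\sum_{u\in\mathcal{V}_n^k}\mathbf{1}\{A_n^k(u)\}\Rightarrow0$ as $n\to\infty$, for all $k\in\{1,2\}$.
   Context: For each $n$, the node set $\mathcal{V}_n=\mathcal{V}_n^1\cup\mathcal{V}_n^2$ is a disjoint union of two communities of sizes $V_n^k=|\mathcal{V}_n^k|$ with $V_n^k/n\to v^k\in(0,\infty)$. The graph $\mathcal{G}_n$ is a stochastic block model: each unordered pair of distinct nodes is an edge independently, with probability $a_n=a\lambda_n/n$ if both are in the same community and $b_n=b\lambda_n/n$ otherwise, where $a>b>0$ are constants and $\lambda_n\to\infty$. $N_n^k(u)$ denotes the number of neighbors of $u$ in $\mathcal{V}_n^k$. $\Rightarrow$ denotes weak convergence (here to the constant $0$). *)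

theory Defs
  imports "HOL-Probability.Probability"
begin

definition comm :: "(nat \<Rightarrow> nat \<Rightarrow> nat) \<Rightarrow> nat \<Rightarrow> nat \<Rightarrow> nat set" where
  "comm V n k = (if k = 1 then {..<V 1 n} else {V 1 n..<V 1 n + V 2 n})"

definition nodes :: "(nat \<Rightarrow> nat \<Rightarrow> nat) \<Rightarrow> nat \<Rightarrow> nat set" where
  "nodes V n = {..<V 1 n + V 2 n}"

text \<open>Unordered pairs of distinct nodes, represented as (i,j) with i < j.\<close>
definition node_pairs :: "(nat \<Rightarrow> nat \<Rightarrow> nat) \<Rightarrow> nat \<Rightarrow> (nat \<times> nat) set" where
  "node_pairs V n = {(i, j). i < j \<and> j \<in> nodes V n}"

definition edge_prob :: "(nat \<Rightarrow> nat \<Rightarrow> nat) \<Rightarrow> (nat \<Rightarrow> real) \<Rightarrow> (nat \<Rightarrow> real) \<Rightarrow> nat \<Rightarrow> nat \<times> nat \<Rightarrow> real" where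
  "edge_prob V p q n e = (if (fst e \<in> comm V n 1) = (snd e \<in> comm V n 1) then p n else q n)"

text \<open>Stochastic block model: independent Bernoulli edges; a graph is the indicator of its edge set.\<close>
definition sbm :: "(nat \<Rightarrow> nat \<Rightarrow> nat) \<Rightarrow> (nat \<Rightarrow> real) \<Rightarrow> (nat \<Rightarrow> real) \<Rightarrow> nat \<Rightarrow> (nat \<times> nat \<Rightarrow> bool) pmf" where
  "sbm V p q n = Pi_pmf (node_pairs V n) False (\<lambda>e. bernoulli_pmf (edge_prob V p q n e))"

definition adj :: "(nat \<times> nat \<Rightarrow> bool) \<Rightarrow> nat \<Rightarrow> nat \<Rightarrow> bool" where
  "adj G u w = (u \<noteq> w \<and> G (min u w, max u w))"

definition nbrs :: "(nat \<Rightarrow> nat \<Rightarrow> nat) \<Rightarrow> nat \<Rightarrow> nat \<Rightarrow> (nat \<times> nat \<Rightarrow> bool) \<Rightarrow> nat \<Rightarrow> nat" where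
  "nbrs V n k G u = card {w \<in> comm V n k. adj G u w}"

end

theory Submission
  imports Defs "HOL-Real_Asymp.Real_Asymp"
begin


lemma cdf_return0:
  "cdf (return borel (0::real)) x = (if x < 0 then 0 else 1)"
  by (simp add: cdf_def2 measure_return indicator_def)

lemma weak_conv_zero:
  fixes P :: "nat \<Rightarrow> 'a pmf" and X :: "nat \<Rightarrow> 'a \<Rightarrow> real"
  assumes nn: "\<And>n x. X n x \<ge> 0"
    and int: "\<And>n. integrable (measure_pmf (P n)) (X n)"
    and E: "(\<lambda>n. measure_pmf.expectation (P n) (X n)) \<longlonglongrightarrow> 0"
  shows "weak_conv_m (\<lambda>n. distr (measure_pmf (P n)) borel (X n)) (return borel 0)"
  unfolding weak_conv_m_def weak_conv_def
proof (intro allI impI)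
  fix x :: real
  assume cont: "isCont (cdf (return borel 0)) x"
  have cdfn: "cdf (distr (measure_pmf (P n)) borel (X n)) x = measure_pmf.prob (P n) {\<omega>. X n \<omega> \<le> x}" for n
    by (simp add: cdf_def2 measure_distr vimage_def Int_def)
  consider "x < 0" | "x = 0" | "x > 0" by linarith
  then show "(\<lambda>n. cdf (distr (measure_pmf (P n)) borel (X n)) x) \<longlonglongrightarrow> cdf (return borel 0) x"
  proof cases
    case 1
    then have "{\<omega>. X n \<omega> \<le> x} = {}" for n using nn[of n] by (auto simp: not_le intro: less_le_trans)
    with 1 show ?thesis by (simp add: cdfn cdf_return0)
  next
    case 2
    have "(\<lambda>m. cdf (return borel 0) (- 1 / (real m + 1))) \<longlonglongrightarrow> cdf (return borel 0) 0"
    proof -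
      have "(\<lambda>m. - 1 / (real m + 1)) \<longlonglongrightarrow> 0" by real_asymp
      then show ?thesis using cont 2 by (intro isCont_tendsto_compose[where g="cdf (return borel 0)"]) auto
    qed
    moreover have "(\<lambda>m. cdf (return borel (0::real)) (- 1 / (real m + 1))) = (\<lambda>m. 0)"
      by (auto simp: cdf_return0 fun_eq_iff divide_simps)
    ultimately have False by (simp add: cdf_return0 LIMSEQ_const_iff)
    then show ?thesis ..
  next
    case 3
    have le: "1 - measure_pmf.expectation (P n) (X n) / x \<le> cdf (distr (measure_pmf (P n)) borel (X n)) x" for n
    proof -
      have "measure_pmf.prob (P n) {\<omega>\<in>space (measure_pmf (P n)). X n \<omega> \<ge> x} \<le> measure_pmf.expectation (P n) (X n) / x"
        by (rule integral_Markov_inequality_measure[where A=UNIV]) (use int nn 3 in auto)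
      moreover have "measure_pmf.prob (P n) {\<omega>. X n \<omega> \<le> x} \<ge> 1 - measure_pmf.prob (P n) {\<omega>. X n \<omega> \<ge> x}"
      proof -
        have "measure_pmf.prob (P n) {\<omega>. X n \<omega> \<le> x} + measure_pmf.prob (P n) {\<omega>. X n \<omega> \<ge> x} \<ge> measure_pmf.prob (P n) ({\<omega>. X n \<omega> \<le> x} \<union> {\<omega>. X n \<omega> \<ge> x})"
          by (rule measure_Un_le) auto
        moreover have "{\<omega>. X n \<omega> \<le> x} \<union> {\<omega>. X n \<omega> \<ge> x} = UNIV" by auto
        ultimately show ?thesis by simp
      qed
      ultimately show ?thesis by (simp add: cdfn)
    qed
    have up: "cdf (distr (measure_pmf (P n)) borel (X n)) x \<le> 1" for n
      by (simp add: cdfn)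
    have "(\<lambda>n. 1 - measure_pmf.expectation (P n) (X n) / x) \<longlonglongrightarrow> 1 - 0 / x"
      using 3 by (intro tendsto_intros E) auto
    then have "(\<lambda>n. 1 - measure_pmf.expectation (P n) (X n) / x) \<longlonglongrightarrow> 1" by simp
    then have "(\<lambda>n. cdf (distr (measure_pmf (P n)) borel (X n)) x) \<longlonglongrightarrow> 1"
      by (rule tendsto_sandwich[rotated 2]) (auto intro!: always_eventually le up)
    with 3 show ?thesis by (simp add: cdf_return0)
  qed
qed



lemma binomial_mgf:
  assumes p: "p \<in> {0..1}"
  shows "measure_pmf.expectation (binomial_pmf m p) (\<lambda>j. exp (s * real j)) = (1 - p + p * exp s) ^ m"
proof -
  have "measure_pmf.expectation (binomial_pmf m p) (\<lambda>j. exp (s * real j)) =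
      (\<Sum>k\<le>m. real (m choose k) * p ^ k * (1 - p) ^ (m - k) * exp (s * real k))"
    using p by (simp add: expectation_binomial_pmf')
  also have "\<dots> = (\<Sum>k\<le>m. real (m choose k) * (p * exp s) ^ k * (1 - p) ^ (m - k))"
  proof (intro sum.cong refl)
    fix k assume "k \<in> {..m}"
    have "exp (s * real k) = exp s ^ k" by (metis exp_of_nat_mult mult.commute)
    then show "real (m choose k) * p ^ k * (1 - p) ^ (m - k) * exp (s * real k) = real (m choose k) * (p * exp s) ^ k * (1 - p) ^ (m - k)"
      by (simp add: power_mult_distrib)
  qed
  also have "\<dots> = (p * exp s + (1 - p)) ^ m"
    by (simp add: binomial_ring)
  finally show ?thesis by (simp add: algebra_simps)
qed

lemma mgf_le_exp:
  assumes p: "p \<in> {0..1}"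
  shows "(1 - p + p * exp s) ^ m \<le> exp (real m * p * (exp s - 1))"
proof -
  have "1 - p + p * exp s \<le> exp (p * (exp s - 1))"
    using exp_ge_add_one_self[of "p * (exp s - 1)"] by (simp add: algebra_simps)
  moreover have "0 \<le> 1 - p + p * exp s" using p by (auto intro!: add_nonneg_nonneg)
  ultimately have "(1 - p + p * exp s) ^ m \<le> exp (p * (exp s - 1)) ^ m"
    by (rule power_mono)
  also have "\<dots> = exp (real m * p * (exp s - 1))"
    by (simp add: exp_of_nat_mult[symmetric] mult.assoc)
  finally show ?thesis .
qed

lemma chernoff_gen:
  assumes p: "p \<in> {0..1}" and ind: "\<And>j. j \<in> S \<Longrightarrow> 1 \<le> exp (s * real j - c)"
  shows "measure_pmf.prob (binomial_pmf m p) S \<le> exp (- c + real m * p * (exp s - 1))"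
proof -
  have "measure_pmf.prob (binomial_pmf m p) S = measure_pmf.expectation (binomial_pmf m p) (indicator S)"
    by simp
  also have "\<dots> \<le> measure_pmf.expectation (binomial_pmf m p) (\<lambda>j. exp (- c) * exp (s * real j))"
    using p ind by (intro integral_mono) (auto simp: indicator_def exp_diff exp_minus field_simps)
  also have "\<dots> = exp (- c) * (1 - p + p * exp s) ^ m"
    using p by (simp add: binomial_mgf)
  also have "\<dots> \<le> exp (- c) * exp (real m * p * (exp s - 1))"
    using p by (intro mult_left_mono mgf_le_exp) auto
  also have "\<dots> = exp (- c + real m * p * (exp s - 1))"
    by (subst exp_add[symmetric]) simp
  finally show ?thesis .
qed

lemma chernoff_upper:
  assumes p: "p \<in> {0..1}" and t: "t \<ge> 0"
  shows "measure_pmf.prob (binomial_pmf m p) {j. real j \<ge> x} \<le> exp (- t * x + real m * p * (exp t - 1))"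
  using chernoff_gen[OF p, of "{j. real j \<ge> x}" t "t * x" m] t
  by (simp add: mult_left_mono flip: right_diff_distrib)

lemma chernoff_lower:
  assumes p: "p \<in> {0..1}" and t: "t \<ge> 0"
  shows "measure_pmf.prob (binomial_pmf m p) {j. real j \<le> x} \<le> exp (t * x + real m * p * (exp (- t) - 1))"
  using chernoff_gen[OF p, of "{j. real j \<le> x}" "-t" "- t * x" m] t
  by (simp add: mult_left_mono flip: right_diff_distrib)



lemma exp_minus_bound: assumes "t \<ge> (0::real)" shows "exp (- t) \<le> 1 - t + t\<^sup>2"
proof -
  have "exp (- t) = 1 / exp t" by (simp add: exp_minus field_simps)
  also have "\<dots> \<le> 1 / (1 + t)" using assms by (intro divide_left_mono) (auto simp: add_pos_nonneg)
  also have "\<dots> \<le> 1 - t + t\<^sup>2"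
    using assms by (simp add: field_simps power2_eq_square)
  finally show ?thesis .
qed

lemma binom_tail:
  fixes p M \<delta> R :: real and m V :: nat
  assumes p: "p \<in> {0..1}" and mV: "m \<le> V" "V \<le> m + 1" and M: "M = p * real V" "M > 0"
    and d: "\<delta> > 0" and R: "R \<ge> 1" and dR: "\<delta> \<le> R\<^sup>2 * M"
  shows "measure_pmf.prob (binomial_pmf m p) {j. \<bar>real j - M\<bar> \<ge> sqrt (M * \<delta>)} \<le> 4 * exp (- \<delta> / (4 * R))"
proof -
  define r where "r = sqrt (\<delta> / M)"
  define s where "s = sqrt (M * \<delta>)"
  define t where "t = r / (2 * R)"
  have r0: "r \<ge> 0" using M d by (simp add: r_def)
  have r2: "r\<^sup>2 = \<delta> / M" using M d by (simp add: r_def)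
  have sMr: "s = M * r"
  proof -
    have "(M * r)\<^sup>2 = M * \<delta>" proof -
      have "M * r\<^sup>2 = \<delta>" using M(2) r2 by (simp add: field_simps)
      then show ?thesis by (metis mult.assoc power2_eq_square power_mult_distrib)
    qed
    then have "sqrt (M * \<delta>) = M * r" using M(2) r0 by (intro real_sqrt_unique) auto
    then show ?thesis by (simp add: s_def)
  qed
  have rR: "r \<le> R"
  proof -
    have "\<delta> / M \<le> R\<^sup>2" using dR M by (simp add: field_simps)
    then have "r \<le> sqrt (R\<^sup>2)" unfolding r_def by (rule real_sqrt_le_mono)
    then show ?thesis using R by simp
  qed
  have t0: "t \<ge> 0" and t1: "t \<le> 1" using r0 R rR by (auto simp: t_def field_simps)
  have Mt2: "M * t\<^sup>2 = \<delta> / (4 * R\<^sup>2)" using M(2) r2 R by (simp add: t_def power_divide field_simps)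
  have ts: "t * s = \<delta> / (2 * R)" using M(2) r2 R by (simp add: t_def sMr field_simps power2_eq_square)
  have key: "\<delta> / (4 * R\<^sup>2) - \<delta> / (2 * R) \<le> - \<delta> / (4 * R)"
  proof -
    have "\<delta> / (4 * R\<^sup>2) \<le> \<delta> / (4 * R)"
      using d R by (intro divide_left_mono) (auto simp: power2_eq_square)
    then show ?thesis by (simp add: field_simps)
  qed
  have mp: "real m * p \<le> M" "real m * p \<ge> M - 1"
  proof -
    have "real m \<le> real V" using mV by simp
    then show "real m * p \<le> M" using p M(1) by (simp add: mult.commute mult_left_mono)
    have "real V \<le> real m + 1" using mV by linarith
    then have "p * real V \<le> p * (real m + 1)" using p by (intro mult_left_mono) auto
    then show "real m * p \<ge> M - 1" using p M by (simp add: algebra_simps)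
  qed
  have up: "measure_pmf.prob (binomial_pmf m p) {j. real j \<ge> M + s} \<le> exp (- \<delta> / (4 * R))"
  proof -
    have "measure_pmf.prob (binomial_pmf m p) {j. real j \<ge> M + s} \<le> exp (- t * (M + s) + real m * p * (exp t - 1))"
      by (rule chernoff_upper[OF p t0])
    also have "\<dots> \<le> exp (- \<delta> / (4 * R))"
    proof (subst exp_le_cancel_iff)
      have e: "exp t - 1 \<le> t + t\<^sup>2" using exp_bound[OF t0 t1] by simp
      have e0: "exp t - 1 \<ge> 0" using t0 by simp
      have "real m * p * (exp t - 1) \<le> M * (exp t - 1)" using mp e0 by (intro mult_right_mono) auto
      also have "\<dots> \<le> M * (t + t\<^sup>2)" using M e by (intro mult_left_mono) auto
      finally have "- t * (M + s) + real m * p * (exp t - 1) \<le> M * t\<^sup>2 - t * s"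
        by (simp add: algebra_simps)
      then show "- t * (M + s) + real m * p * (exp t - 1) \<le> - \<delta> / (4 * R)"
        using Mt2 ts key by linarith
    qed
    finally show ?thesis .
  qed
  have lo: "measure_pmf.prob (binomial_pmf m p) {j. real j \<le> M - s} \<le> 3 * exp (- \<delta> / (4 * R))"
  proof -
    have "measure_pmf.prob (binomial_pmf m p) {j. real j \<le> M - s} \<le> exp (t * (M - s) + real m * p * (exp (- t) - 1))"
      by (rule chernoff_lower[OF p t0])
    also have "\<dots> \<le> exp (1 + - \<delta> / (4 * R))"
    proof (subst exp_le_cancel_iff)
      have e: "exp (- t) - 1 \<le> - t + t\<^sup>2" using exp_minus_bound[OF t0] by simp
      have e0: "exp (- t) - 1 \<le> 0" using t0 by simp
      have e1: "exp (- t) - 1 \<ge> - 1" by (simp add: add_nonneg_nonneg)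
      have "real m * p * (exp (- t) - 1) \<le> (M - 1) * (exp (- t) - 1)"
        using mp e0 by (intro mult_right_mono_neg) auto
      also have "\<dots> = M * (exp (- t) - 1) - (exp (- t) - 1)" by (simp add: algebra_simps)
      also have "\<dots> \<le> M * (- t + t\<^sup>2) + 1" using M e e1 by (smt (verit) mult_left_mono)
      finally have "t * (M - s) + real m * p * (exp (- t) - 1) \<le> M * t\<^sup>2 - t * s + 1"
        by (simp add: algebra_simps)
      then show "t * (M - s) + real m * p * (exp (- t) - 1) \<le> 1 + - \<delta> / (4 * R)"
        using Mt2 ts key by linarith
    qed
    also have "\<dots> = exp 1 * exp (- \<delta> / (4 * R))" by (rule exp_add)
    also have "\<dots> \<le> 3 * exp (- \<delta> / (4 * R))" by (intro mult_right_mono exp_le) auto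
    finally show ?thesis .
  qed
  have "measure_pmf.prob (binomial_pmf m p) {j. \<bar>real j - M\<bar> \<ge> sqrt (M * \<delta>)}
      \<le> measure_pmf.prob (binomial_pmf m p) ({j. real j \<ge> M + s} \<union> {j. real j \<le> M - s})"
    by (intro measure_pmf.finite_measure_mono) (auto simp: s_def)
  also have "\<dots> \<le> measure_pmf.prob (binomial_pmf m p) {j. real j \<ge> M + s} + measure_pmf.prob (binomial_pmf m p) {j. real j \<le> M - s}"
    by (rule measure_Un_le) auto
  also have "\<dots> \<le> 4 * exp (- \<delta> / (4 * R))" using up lo by linarith
  finally show ?thesis .
qed



lemma comm_sub_nodes: "k \<in> {1,2} \<Longrightarrow> comm V n k \<subseteq> nodes V n"
  by (auto simp: comm_def nodes_def)

lemma card_comm: "k \<in> {1,2} \<Longrightarrow> card (comm V n k) = V k n"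
  by (auto simp: comm_def)

lemma finite_comm: "finite (comm V n k)"
  by (auto simp: comm_def)

lemma finite_node_pairs: "finite (node_pairs V n)"
proof -
  have "node_pairs V n \<subseteq> nodes V n \<times> nodes V n" by (auto simp: node_pairs_def nodes_def)
  then show ?thesis by (rule finite_subset) (auto simp: nodes_def)
qed

lemma nbrs_binomial:
  assumes k: "k \<in> {1,2}" and u: "u \<in> comm V n k"
    and p: "p n \<in> {0..1}" and q: "q n \<in> {0..1}"
  shows "map_pmf (\<lambda>G. nbrs V n k G u) (sbm V p q n) = binomial_pmf (V k n - 1) (p n)"
proof -
  define W where "W = comm V n k - {u}"
  define f where "f = (\<lambda>w. (min u w, max u w))"
  define E where "E = f ` W"
  have injf: "inj_on f W"
    by (auto simp: inj_on_def f_def W_def min_def max_def split: if_splits)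
  have finW: "finite W" by (simp add: W_def finite_comm)
  have finE: "finite E" using finW by (simp add: E_def)
  have cardE: "card E = V k n - 1"
    using injf u k finW by (simp add: E_def card_image W_def card_comm finite_comm)
  have EN: "E \<subseteq> node_pairs V n"
    using comm_sub_nodes[OF k, of V n] u
    by (auto simp: E_def W_def f_def node_pairs_def min_def max_def)
  have cnt: "nbrs V n k G u = card {e\<in>E. G e}" for G
  proof -
    have "{w\<in>comm V n k. adj G u w} = {w\<in>W. G (f w)}"
      by (auto simp: W_def adj_def f_def)
    moreover have "card {w\<in>W. G (f w)} = card (f ` {w\<in>W. G (f w)})"
      by (rule card_image[symmetric]) (rule inj_on_subset[OF injf], auto)
    moreover have "f ` {w\<in>W. G (f w)} = {e\<in>E. G e}" by (auto simp: E_def)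
    ultimately show ?thesis by (simp add: nbrs_def)
  qed
  have ep: "edge_prob V p q n e = p n" if "e \<in> E" for e
    using that k u by (auto simp: E_def W_def f_def edge_prob_def comm_def min_def max_def split: if_splits)
  have "map_pmf (\<lambda>G. nbrs V n k G u) (sbm V p q n) = map_pmf (\<lambda>G. card {e\<in>E. G e}) (sbm V p q n)"
    by (simp add: cnt)
  also have "\<dots> = map_pmf (\<lambda>G. card {e\<in>E. G e}) (map_pmf (\<lambda>f x. if x \<in> E then f x else False) (sbm V p q n))"
    unfolding map_pmf_comp
  proof (intro map_pmf_cong refl)
    fix G :: "nat \<times> nat \<Rightarrow> bool"
    have "{e\<in>E. G e} = {e\<in>E. (\<lambda>x. if x \<in> E then G x else False) e}" by auto
    then show "card {e\<in>E. G e} = card {e\<in>E. (\<lambda>x. if x \<in> E then G x else False) e}" by simp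
  qed
  also have "map_pmf (\<lambda>f x. if x \<in> E then f x else False) (sbm V p q n) =
      Pi_pmf E False (\<lambda>e. bernoulli_pmf (edge_prob V p q n e))"
    unfolding sbm_def by (rule Pi_pmf_subset[symmetric, OF finite_node_pairs EN])
  also have "\<dots> = Pi_pmf E False (\<lambda>_. bernoulli_pmf (p n))"
    by (rule Pi_pmf_cong) (auto simp: ep)
  also have "map_pmf (\<lambda>G. card {e\<in>E. G e}) \<dots> = binomial_pmf (card E) (p n)"
    by (rule binomial_pmf_altdef'[symmetric, OF finE refl p])
  finally show ?thesis by (simp add: cardE)
qed


lemma xexp: fixes c::real assumes "c > 0" shows "((\<lambda>x. x * exp (- c * x)) \<longlongrightarrow> 0) at_top"
  using assms by real_asymp
lemma limsup_bound:
  assumes "limsup (\<lambda>n. ereal (f n)) < \<infinity>"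
  obtains L :: real where "L > 0" "eventually (\<lambda>n. f n \<le> L) sequentially"
proof -
  obtain C :: real where C: "limsup (\<lambda>n. ereal (f n)) < ereal C"
    using assms by (cases "limsup (\<lambda>n. ereal (f n))") (auto, meson gt_ex)
  then have "eventually (\<lambda>n. ereal (f n) < ereal C) sequentially"
    by (rule Limsup_lessD)
  then have "eventually (\<lambda>n. f n \<le> max C 1) sequentially"
    by eventually_elim auto
  then show ?thesis using that[of "max C 1"] by auto
qed


theorem lemmaB2:
  fixes V :: "nat \<Rightarrow> nat \<Rightarrow> nat" and v :: "nat \<Rightarrow> real"
    and a b :: real and lam \<gamma> \<delta> :: "nat \<Rightarrow> real" and k :: nat
  assumes sizes: "\<And>j. j \<in> {1, 2} \<Longrightarrow> (\<lambda>n. real (V j n) / real n) \<longlonglongrightarrow> v j \<and> v j > 0"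
    and ab: "a > b" "b > 0"
    and lam_lim: "filterlim lam at_top sequentially"
    and lam_prob: "\<And>n. 0 \<le> lam n \<and> a * lam n / real n \<le> 1"
    and gam_pos: "\<And>n. \<gamma> n > 0"
    and del_pos: "\<And>n. \<delta> n > 0"
    and del_lim: "filterlim \<delta> at_top sequentially"
    and del_lam: "limsup (\<lambda>n. ereal (\<delta> n / lam n)) < \<infinity>"
    and gam_del: "limsup (\<lambda>n. ereal (\<gamma> n / \<delta> n)) < \<infinity>"
    and k: "k \<in> {1, 2}"
  shows "weak_conv_m
    (\<lambda>n. distr (measure_pmf (sbm V (\<lambda>m. a * lam m / real m) (\<lambda>m. b * lam m / real m) n)) borel
       (\<lambda>G. \<gamma> n / real n *
          real (card {u \<in> comm V n k.
             \<bar>real (nbrs V n k G u) - a * lam n / real n * real (V k n)\<bar>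
               \<ge> sqrt (a * lam n / real n * real (V k n) * \<delta> n)})))
    (return borel 0)"
proof -
  define pp where "pp = (\<lambda>m. a * lam m / real m)"
  define qq where "qq = (\<lambda>m. b * lam m / real m)"
  define Mn where "Mn = (\<lambda>n. pp n * real (V k n))"
  define Ev where "Ev = (\<lambda>n u G. \<bar>real (nbrs V n k G u) - Mn n\<bar> \<ge> sqrt (Mn n * \<delta> n))"
  define X where "X = (\<lambda>n G. \<gamma> n / real n * real (card {u \<in> comm V n k. Ev n u G}))"
  define P where "P = (\<lambda>n. sbm V pp qq n)"
  have a0: "a > 0" using ab by linarith
  have pp01: "pp n \<in> {0..1}" for n
    using lam_prob[of n] a0 by (auto simp: pp_def)
  have qq01: "qq n \<in> {0..1}" for n
  proof -
    have "b * lam n \<le> a * lam n" using ab lam_prob[of n] by (intro mult_right_mono) auto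
    then have "qq n \<le> pp n" by (simp add: qq_def pp_def divide_right_mono)
    moreover have "qq n \<ge> 0" using ab lam_prob[of n] by (simp add: qq_def)
    ultimately show ?thesis using pp01[of n] by auto
  qed
  have Xnn: "X n G \<ge> 0" for n G using gam_pos[of n] by (simp add: X_def)
  have Xle: "X n G \<le> \<gamma> n / real n * real (V k n)" for n G
  proof -
    have "card {u \<in> comm V n k. Ev n u G} \<le> card (comm V n k)"
      by (rule card_mono) (auto simp: finite_comm)
    then have "real (card {u \<in> comm V n k. Ev n u G}) \<le> real (V k n)" using k by (simp add: card_comm)
    moreover have "\<gamma> n / real n \<ge> 0" using gam_pos[of n] by simp
    ultimately show ?thesis unfolding X_def by (rule mult_left_mono)
  qed
  have Xint: "integrable (measure_pmf (P n)) (X n)" for n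
    by (rule measure_pmf.integrable_const_bound[where B="\<gamma> n / real n * real (V k n)"])
       (use Xnn Xle in auto)
  have EX: "measure_pmf.expectation (P n) (X n) =
      \<gamma> n / real n * (\<Sum>u\<in>comm V n k. measure_pmf.prob (P n) {G. Ev n u G})" for n
  proof -
    have "X n = (\<lambda>G. \<gamma> n / real n * (\<Sum>u\<in>comm V n k. indicator {G. Ev n u G} G))"
    proof
      fix G
      have "(\<Sum>u\<in>comm V n k. indicator {G. Ev n u G} G :: real) = (\<Sum>u\<in>comm V n k. if Ev n u G then 1 else 0)"
        by (intro sum.cong) (auto simp: indicator_def)
      also have "\<dots> = real (card {u \<in> comm V n k. Ev n u G})"
        by (simp add: sum.inter_filter[symmetric] finite_comm)
      finally show "X n G = \<gamma> n / real n * (\<Sum>u\<in>comm V n k. indicator {G. Ev n u G} G)"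
        by (simp add: X_def)
    qed
    then show ?thesis
      by (simp add: Bochner_Integration.integral_sum measure_pmf.integrable_const_bound[where B=1])
  qed
  have probEv: "measure_pmf.prob (P n) {G. Ev n u G} =
      measure_pmf.prob (binomial_pmf (V k n - 1) (pp n)) {j. \<bar>real j - Mn n\<bar> \<ge> sqrt (Mn n * \<delta> n)}"
    if u: "u \<in> comm V n k" for n u
  proof -
    have "measure_pmf.prob (binomial_pmf (V k n - 1) (pp n)) {j. \<bar>real j - Mn n\<bar> \<ge> sqrt (Mn n * \<delta> n)}
        = measure_pmf.prob (map_pmf (\<lambda>G. nbrs V n k G u) (P n)) {j. \<bar>real j - Mn n\<bar> \<ge> sqrt (Mn n * \<delta> n)}"
      unfolding P_def by (subst nbrs_binomial[OF k u pp01 qq01]) (rule refl)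
    also have "\<dots> = measure_pmf.prob (P n) {G. Ev n u G}"
      by (simp add: Ev_def vimage_def)
    finally show ?thesis ..
  qed
  obtain L where L: "L > 0" "eventually (\<lambda>n. \<delta> n / lam n \<le> L) sequentially"
    using limsup_bound[OF del_lam] by blast
  obtain Gm where Gm: "Gm > 0" "eventually (\<lambda>n. \<gamma> n / \<delta> n \<le> Gm) sequentially"
    using limsup_bound[OF gam_del] by blast
  have vk: "v k > 0" "(\<lambda>n. real (V k n) / real n) \<longlonglongrightarrow> v k" using sizes[OF k] by auto
  define R where "R = max 1 (2 * L / (a * v k))"
  have R1: "R \<ge> 1" by (simp add: R_def)
  have ev_lam: "eventually (\<lambda>n. lam n > 0) sequentially"
    using lam_lim unfolding filterlim_at_top_dense by blast
  have ev_v1: "eventually (\<lambda>n. real (V k n) / real n > v k / 2) sequentially"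
    using vk by (intro order_tendstoD(1)[OF vk(2)]) auto
  have ev_v2: "eventually (\<lambda>n. real (V k n) / real n < 2 * v k) sequentially"
    using vk by (intro order_tendstoD(2)[OF vk(2)]) auto
  define h where "h = (\<lambda>n. 8 * Gm * v k * (\<delta> n * exp (- (1 / (4 * R)) * \<delta> n)))"
  have h0: "h \<longlonglongrightarrow> 0"
  proof -
    have "((\<lambda>x. x * exp (- (1 / (4 * R)) * x)) \<longlongrightarrow> 0) at_top"
      using R1 by (intro xexp) auto
    then have "(\<lambda>n. \<delta> n * exp (- (1 / (4 * R)) * \<delta> n)) \<longlonglongrightarrow> 0"
      by (rule filterlim_compose[OF _ del_lim])
    then have "(\<lambda>n. 8 * Gm * v k * (\<delta> n * exp (- (1 / (4 * R)) * \<delta> n))) \<longlonglongrightarrow> 8 * Gm * v k * 0"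
      by (intro tendsto_intros)
    then show ?thesis by (simp add: h_def)
  qed
  have ev_bound: "eventually (\<lambda>n. measure_pmf.expectation (P n) (X n) \<le> h n) sequentially"
    using L(2) Gm(2) ev_lam ev_v1 ev_v2 eventually_gt_at_top[of 0]
  proof eventually_elim
    case (elim n)
    have n0: "real n > 0" using elim by simp
    have Vn: "real (V k n) > 0"
    proof (rule ccontr)
      assume "\<not> real (V k n) > 0"
      then have "real (V k n) = 0" by simp
      then have "real (V k n) / real n = 0" by (simp only: div_0)
      then show False using elim(4) vk(1) by linarith
    qed
    have lam0: "lam n > 0" using elim by simp
    have Mn_eq: "Mn n = a * lam n * (real (V k n) / real n)" by (simp add: Mn_def pp_def)
    have Mlow: "Mn n \<ge> a * lam n * (v k / 2)"
      unfolding Mn_eq using elim(4) a0 lam0 by (intro mult_left_mono) auto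
    have Mpos: "Mn n > 0" using Mlow a0 lam0 vk(1)
      by (smt (verit) mult_pos_pos half_gt_zero)
    have dL: "\<delta> n \<le> L * lam n" using elim(1) lam0 by (simp add: field_simps)
    have "L * lam n = (2 * L / (a * v k)) * (a * lam n * (v k / 2))"
      using a0 vk(1) by (simp add: field_simps)
    also have "\<dots> \<le> R * Mn n"
      using Mlow L(1) a0 vk(1) lam0 by (intro mult_mono) (auto simp: R_def)
    also have "\<dots> \<le> R\<^sup>2 * Mn n"
      using R1 Mpos by (intro mult_right_mono) (auto simp: power2_eq_square)
    finally have dR: "\<delta> n \<le> R\<^sup>2 * Mn n" using dL by linarith
    have pb: "measure_pmf.prob (P n) {G. Ev n u G} \<le> 4 * exp (- \<delta> n / (4 * R))"
      if u: "u \<in> comm V n k" for u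
      unfolding probEv[OF u]
      by (rule binom_tail[OF pp01, of "V k n - 1" "V k n"]) (use Mpos del_pos R1 dR in \<open>auto simp: Mn_def\<close>)
    have "measure_pmf.expectation (P n) (X n) \<le> \<gamma> n / real n * (\<Sum>u\<in>comm V n k. 4 * exp (- \<delta> n / (4 * R)))"
      unfolding EX using gam_pos[of n] n0 by (intro mult_left_mono sum_mono pb) auto
    also have "\<dots> = 4 * (\<gamma> n / \<delta> n) * (real (V k n) / real n) * (\<delta> n * exp (- (1 / (4 * R)) * \<delta> n))"
      using k del_pos[of n] n0 by (simp add: card_comm field_simps)
    also have "\<dots> \<le> 4 * Gm * (2 * v k) * (\<delta> n * exp (- (1 / (4 * R)) * \<delta> n))"
      using elim(2) elim(5) gam_pos[of n] del_pos[of n] n0 Gm(1)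
      by (intro mult_mono mult_right_mono) (auto intro!: mult_nonneg_nonneg less_imp_le)
    also have "\<dots> = h n" by (simp add: h_def)
    finally show ?case .
  qed
  have E0: "(\<lambda>n. measure_pmf.expectation (P n) (X n)) \<longlonglongrightarrow> 0"
    by (rule tendsto_sandwich[OF _ ev_bound tendsto_const h0])
       (intro always_eventually allI Bochner_Integration.integral_nonneg Xnn)
  have "weak_conv_m (\<lambda>n. distr (measure_pmf (P n)) borel (X n)) (return borel 0)"
    by (rule weak_conv_zero[OF Xnn Xint E0])
  then show ?thesis
    by (simp only: P_def X_def Ev_def Mn_def pp_def qq_def)
qed


end
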